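(* Let $\theta,\phi\in\mathcal{T}\subset\mathbb{R}^L$, where $\mathcal{T}$ is a bounded set of signals. Then for $\sigma$ bigger than a threshold $\sigma_0(L)$ and $\varrho(\theta,\phi)$ small enough, we have $D_{KL}(p_\theta\|p_\phi)\ge C\sigma^{-4}\|\Delta_2(\theta,\phi)\|_F^2$ for a positive constant $C$.
   Context: Vectors are functions on $\mathbb{Z}_L$; $\mathcal{G}$ is the group of cyclic shifts $(g\cdot\theta)(i)=\theta(i+g)$, and $G$ is uniform on $\mathcal{G}$. $p_\theta(y)=\frac1L\sum_{R\in\mathcal{G}}(2\pi\sigma^2)^{-L/2}e^{-\|y-R\theta\|^2/(2\sigma^2)}$ is the MRA observation density with noise level $\sigma>0$; $D_{KL}$ is the Kullback–Leibler divergence. $\Delta_2(\theta,\phi)=\mathbb{E}_G[(G\theta)^{\otimes2}]-\mathbb{E}_G[(G\phi)^{\otimes2}]$, $\|\cdot\|_F$ the Frobenius norm. $\varrho(\theta,\phi)=\frac1{\sqrt L}\min_g\|\theta-g\cdot\phi\|_2$. *)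

theory Defs
  imports "HOL-Analysis.Analysis" "HOL-Probability.Probability"
begin

text \<open>Signals in R^L are functions nat => real, only indices 0..L-1 matter
  (identified with Z_L). Observation space: PiM {..<L} (\<lambda>_. lborel).\<close>

definition shift :: "nat \<Rightarrow> nat \<Rightarrow> (nat \<Rightarrow> real) \<Rightarrow> (nat \<Rightarrow> real)" where
  "shift L g \<theta> = restrict (\<lambda>i. \<theta> ((i + g) mod L)) {..<L}"

definition sqnorm :: "nat \<Rightarrow> (nat \<Rightarrow> real) \<Rightarrow> real" where
  "sqnorm L x = (\<Sum>i<L. (x i)\<^sup>2)"

definition obs_space :: "nat \<Rightarrow> (nat \<Rightarrow> real) measure" where
  "obs_space L = PiM {..<L} (\<lambda>_. lborel)"

definition mra_density :: "nat \<Rightarrow> real \<Rightarrow> (nat \<Rightarrow> real) \<Rightarrow> (nat \<Rightarrow> real) \<Rightarrow> real" where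
  "mra_density L \<sigma> \<theta> y = (1 / real L) * (\<Sum>g<L.
      (2 * pi * \<sigma>\<^sup>2) powr (- real L / 2) *
      exp (- (\<Sum>i<L. (y i - shift L g \<theta> i)\<^sup>2) / (2 * \<sigma>\<^sup>2)))"

definition KL_mra :: "nat \<Rightarrow> real \<Rightarrow> (nat \<Rightarrow> real) \<Rightarrow> (nat \<Rightarrow> real) \<Rightarrow> real" where
  "KL_mra L \<sigma> \<theta> \<phi> = (\<integral>y. mra_density L \<sigma> \<theta> y *
       ln (mra_density L \<sigma> \<theta> y / mra_density L \<sigma> \<phi> y) \<partial>obs_space L)"

definition moment2 :: "nat \<Rightarrow> (nat \<Rightarrow> real) \<Rightarrow> nat \<Rightarrow> nat \<Rightarrow> real" where
  "moment2 L \<theta> i j = (1 / real L) * (\<Sum>g<L. shift L g \<theta> i * shift L g \<theta> j)"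

definition frob2_Delta2 :: "nat \<Rightarrow> (nat \<Rightarrow> real) \<Rightarrow> (nat \<Rightarrow> real) \<Rightarrow> real" where
  "frob2_Delta2 L \<theta> \<phi> = (\<Sum>i<L. \<Sum>j<L. (moment2 L \<theta> i j - moment2 L \<phi> i j)\<^sup>2)"

definition rho :: "nat \<Rightarrow> (nat \<Rightarrow> real) \<Rightarrow> (nat \<Rightarrow> real) \<Rightarrow> real" where
  "rho L \<theta> \<phi> = (1 / sqrt (real L)) *
     Min ((\<lambda>g. sqrt (\<Sum>i<L. (\<theta> i - shift L g \<phi> i)\<^sup>2)) ` {..<L})"

end

theory Submission
  imports Defs
begin

lemma nm_basic:
  fixes m s :: real assumes s: "0 < s"
  shows "has_bochner_integral lborel (\<lambda>z. normal_density m s z * (z - m)^2) (s^2)"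
    and "has_bochner_integral lborel (\<lambda>z. normal_density m s z * (z - m)^4) (3 * s^4)"
    and "has_bochner_integral lborel (\<lambda>z. normal_density m s z * (z - m)^3) 0"
    and "has_bochner_integral lborel (\<lambda>z. normal_density m s z * (z - m)) 0"
    and "has_bochner_integral lborel (\<lambda>z. normal_density m s z) 1"
proof -
  show "has_bochner_integral lborel (\<lambda>z. normal_density m s z * (z - m)^2) (s^2)"
    using normal_moment_even[OF s, of m 1] by (simp add: power2_eq_square)
  show "has_bochner_integral lborel (\<lambda>z. normal_density m s z * (z - m)^4) (3 * s^4)"
    using normal_moment_even[OF s, of m 2] by (simp add: eval_nat_numeral field_simps)
  show "has_bochner_integral lborel (\<lambda>z. normal_density m s z * (z - m)^3) 0"
    using normal_moment_odd[OF s, of m 1] by (simp add: eval_nat_numeral)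
  show "has_bochner_integral lborel (\<lambda>z. normal_density m s z * (z - m)) 0"
    using normal_moment_odd[OF s, of m 0] by (simp)
  show "has_bochner_integral lborel (\<lambda>z. normal_density m s z) 1"
    using normal_moment_even[OF s, of m 0] by (simp)
qed

lemma nm2:
  fixes m s :: real assumes s: "0 < s"
  shows "has_bochner_integral lborel (\<lambda>z. normal_density m s z * z^2) (m^2 + s^2)"
proof -
  note b = nm_basic[OF s, of m]
  have "has_bochner_integral lborel (\<lambda>z. normal_density m s z * (z - m)^2 + (2*m) * (normal_density m s z * (z - m)) + m^2 * normal_density m s z) (s^2 + (2*m) * 0 + m^2 * 1)"
    by (intro has_bochner_integral_add has_bochner_integral_mult_right b)
  then show ?thesis
    by (rule has_bochner_integral_cong[THEN iffD1, rotated -1]) (auto simp: power2_eq_square algebra_simps)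
qed

lemma nm4:
  fixes m s :: real assumes s: "0 < s"
  shows "has_bochner_integral lborel (\<lambda>z. normal_density m s z * z^4) (m^4 + 6 * m^2 * s^2 + 3 * s^4)"
proof -
  note b = nm_basic[OF s, of m]
  have "has_bochner_integral lborel (\<lambda>z. normal_density m s z * (z - m)^4 + (4*m) * (normal_density m s z * (z - m)^3)
     + (6*m^2) * (normal_density m s z * (z - m)^2)
     + (4*m^3) * (normal_density m s z * (z - m)) + m^4 * normal_density m s z) (3 * s^4 + (4*m) * 0 + (6*m^2) * s^2 + (4*m^3) * 0 + m^4 * 1)"
    by (intro has_bochner_integral_add has_bochner_integral_mult_right b)
  then show ?thesis
    by (rule has_bochner_integral_cong[THEN iffD1, rotated -1]) (auto simp: eval_nat_numeral algebra_simps)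
qed

lemma nm1:
  fixes m s :: real assumes s: "0 < s"
  shows "has_bochner_integral lborel (\<lambda>z. normal_density m s z * z^1) m"
  using normal_moment_nz_1[OF s, of m] by simp

lemma nm0:
  fixes m s :: real assumes s: "0 < s"
  shows "has_bochner_integral lborel (\<lambda>z. normal_density m s z * z^0) 1"
  using nm_basic(5)[OF s, of m] by simp
definition mv :: "real \<Rightarrow> real \<Rightarrow> nat \<Rightarrow> real" where
  "mv a s n = (if n = 0 then 1 else if n = 1 then a else if n = 2 then a^2 + s^2
      else a^4 + 6 * a^2 * s^2 + 3 * s^4)"

lemma nm_mv:
  assumes s: "0 < s" and n: "n \<in> {0,1,2,4}"
  shows "has_bochner_integral lborel (\<lambda>z. normal_density a s z * z^n) (mv a s n)"
  using n nm0[OF s] nm1[OF s] nm2[OF s] nm4[OF s] by (auto simp: mv_def)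

interpretation lbprod: product_sigma_finite "\<lambda>_::nat. lborel::real measure"
  by (simp add: product_sigma_finite_def lborel.sigma_finite_measure_axioms)

definition comp :: "nat \<Rightarrow> real \<Rightarrow> (nat \<Rightarrow> real) \<Rightarrow> (nat \<Rightarrow> real) \<Rightarrow> real" where
  "comp L s a y = (\<Prod>k<L. normal_density (a k) s (y k))"

lemma prod_mom:
  assumes s: "0 < s" and e: "\<And>k. k < L \<Longrightarrow> e k \<in> {0,1,2,4}"
  shows "has_bochner_integral (obs_space L) (\<lambda>y. comp L s a y * (\<Prod>k<L. y k ^ e k)) (\<Prod>k<L. mv (a k) s (e k))"
proof -
  have int: "\<And>k. k \<in> {..<L} \<Longrightarrow> integrable lborel (\<lambda>z. normal_density (a k) s z * z ^ e k)"
    using integrable.intros[OF nm_mv[OF s e]] by simp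
  have I: "integrable (obs_space L) (\<lambda>y. \<Prod>k\<in>{..<L}. normal_density (a k) s (y k) * y k ^ e k)"
    unfolding obs_space_def
    by (rule lbprod.product_integrable_prod[where f="\<lambda>k z. normal_density (a k) s z * z ^ e k"]) (use int in auto)
  have V: "(\<integral>y. (\<Prod>k\<in>{..<L}. normal_density (a k) s (y k) * y k ^ e k) \<partial>obs_space L) = (\<Prod>k<L. mv (a k) s (e k))"
    unfolding obs_space_def
    apply (subst lbprod.product_integral_prod[where f="\<lambda>k z. normal_density (a k) s z * z ^ e k"])
    using int apply auto[2]
    apply (rule prod.cong, simp)
    using has_bochner_integral_integral_eq[OF nm_mv[OF s e]] by simp
  have eq: "(\<lambda>y. comp L s a y * (\<Prod>k<L. y k ^ e k)) = (\<lambda>y. \<Prod>k\<in>{..<L}. normal_density (a k) s (y k) * y k ^ e k)"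
    by (auto simp: comp_def prod.distrib)
  show ?thesis unfolding eq using has_bochner_integral_integrable[OF I] V by simp
qed

lemma comp_I0:
  assumes s: "0 < s"
  shows "has_bochner_integral (obs_space L) (comp L s a) 1"
  using prod_mom[OF s, of L "\<lambda>_. 0" a] by (simp add: mv_def)

lemma comp_I4:
  assumes s: "0 < s" and i: "i < L"
  shows "has_bochner_integral (obs_space L) (\<lambda>y. comp L s a y * (y i)^4) ((a i)^4 + 6 * (a i)^2 * s^2 + 3 * s^4)"
proof -
  have h: "has_bochner_integral (obs_space L) (\<lambda>y. comp L s a y * (\<Prod>k<L. y k ^ (if k = i then 4 else 0))) (\<Prod>k<L. mv (a k) s (if k = i then 4 else 0))"
    by (rule prod_mom[OF s]) auto
  moreover have e1: "\<And>y. (\<Prod>k<L. y k ^ (if k = i then 4 else 0)) = (y i)^4"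
    using i by (simp add: if_distrib[of "\<lambda>n. _ ^ n"] prod.delta cong: if_cong)
  moreover have e2: "(\<Prod>k<L. mv (a k) s (if k = i then 4 else 0)) = (a i)^4 + 6 * (a i)^2 * s^2 + 3 * s^4"
  proof -
    have "(\<lambda>k. mv (a k) s (if k = i then 4 else 0)) = (\<lambda>k. if k = i then (a k)^4 + 6 * (a k)^2 * s^2 + 3 * s^4 else 1)"
      by (auto simp: mv_def fun_eq_iff)
    then show ?thesis using i by (simp only: prod.delta finite_lessThan) simp
  qed
  show ?thesis by (rule h[unfolded e1 e2])
qed

lemma comp_I2:
  assumes s: "0 < s" and i: "i < L" and j: "j < L"
  shows "has_bochner_integral (obs_space L) (\<lambda>y. comp L s a y * (y i * y j)) (a i * a j + (if i = j then s^2 else 0))"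
proof (cases "i = j")
  case True
  have h: "has_bochner_integral (obs_space L) (\<lambda>y. comp L s a y * (\<Prod>k<L. y k ^ (if k = i then 2 else 0))) (\<Prod>k<L. mv (a k) s (if k = i then 2 else 0))"
    by (rule prod_mom[OF s]) auto
  moreover have e1: "\<And>y. (\<Prod>k<L. y k ^ (if k = i then 2 else 0)) = y i * y j"
    using i True by (simp add: if_distrib[of "\<lambda>n. _ ^ n"] prod.delta power2_eq_square cong: if_cong)
  moreover have e2: "(\<Prod>k<L. mv (a k) s (if k = i then 2 else 0)) = a i * a j + (if i = j then s^2 else 0)"
  proof -
    have "(\<lambda>k. mv (a k) s (if k = i then 2 else 0)) = (\<lambda>k. if k = i then (a k)^2 + s^2 else 1)"
      by (auto simp: mv_def fun_eq_iff)
    then show ?thesis using i True by (simp only: prod.delta finite_lessThan) (simp add: power2_eq_square)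
  qed
  show ?thesis by (rule h[unfolded e1 e2])
next
  case False
  let ?e = "\<lambda>k. if k = i then 1 else if k = j then 1 else (0::nat)"
  have h: "has_bochner_integral (obs_space L) (\<lambda>y. comp L s a y * (\<Prod>k<L. y k ^ ?e k)) (\<Prod>k<L. mv (a k) s (?e k))"
    by (rule prod_mom[OF s]) auto
  moreover have e1: "(\<Prod>k<L. y k ^ ?e k) = y i * y j" for y :: "nat \<Rightarrow> real"
  proof -
    have "(\<Prod>k<L. y k ^ ?e k) = (\<Prod>k<L. (if k = i then y k else 1) * (if k = j then y k else 1))"
      using False by (intro prod.cong) auto
    also have "\<dots> = y i * y j" using i j by (simp add: prod.distrib prod.delta)
    finally show ?thesis .
  qed
  moreover have e2: "(\<Prod>k<L. mv (a k) s (?e k)) = a i * a j + (if i = j then s^2 else 0)"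
  proof -
    have "(\<Prod>k<L. mv (a k) s (?e k)) = (\<Prod>k<L. (if k = i then a k else 1) * (if k = j then a k else 1))"
      using False by (intro prod.cong) (auto simp: mv_def)
    also have "\<dots> = a i * a j" using i j by (simp add: prod.distrib prod.delta)
    finally show ?thesis using False by simp
  qed
  show ?thesis by (rule h[unfolded e1 e2])
qed
lemma powr_sqrt_aux:
  fixes x :: real assumes x: "0 < x"
  shows "(1 / sqrt x) ^ L = x powr (- real L / 2)"
proof -
  have "1 / sqrt x = x powr (-(1/2))"
    using x by (simp add: powr_half_sqrt[symmetric] powr_minus_divide)
  then have "(1 / sqrt x) ^ L = (x powr (-(1/2))) ^ L" by simp
  also have "\<dots> = x powr (real L * (-(1/2)))" using x by (subst powr_power) auto
  finally show ?thesis by simp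
qed

lemma dens_comp:
  assumes s: "0 < s"
  shows "(2 * pi * s^2) powr (- real L / 2) * exp (- (\<Sum>i<L. (y i - a i)^2) / (2 * s^2)) = comp L s a y"
proof -
  have "comp L s a y = (\<Prod>k<L. (1 / sqrt (2 * pi * s^2)) * exp (- ((y k - a k)^2) / (2 * s^2)))"
    by (simp add: comp_def normal_density_def)
  also have "\<dots> = (1 / sqrt (2 * pi * s^2)) ^ L * exp (\<Sum>k<L. - ((y k - a k)^2) / (2 * s^2))"
    by (simp only: prod.distrib prod_constant card_lessThan) (simp add: exp_sum)
  also have "(\<Sum>k<L. - ((y k - a k)^2) / (2 * s^2)) = - (\<Sum>i<L. (y i - a i)^2) / (2 * s^2)"
    by (simp add: sum_divide_distrib[symmetric] sum_negf)
  also have "(1 / sqrt (2 * pi * s^2)) ^ L = (2 * pi * s^2) powr (- real L / 2)"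
    using s by (intro powr_sqrt_aux) simp
  finally show ?thesis by simp
qed

lemma mra_comp:
  assumes s: "0 < s"
  shows "mra_density L s t y = (1 / real L) * (\<Sum>g<L. comp L s (shift L g t) y)"
  unfolding mra_density_def using dens_comp[OF s] by simp

lemma mix_hbi:
  assumes s: "0 < s" and h: "\<And>g. g < L \<Longrightarrow> has_bochner_integral (obs_space L) (\<lambda>y. comp L s (shift L g t) y * f y) (v g)"
  shows "has_bochner_integral (obs_space L) (\<lambda>y. mra_density L s t y * f y) ((1 / real L) * (\<Sum>g<L. v g))"
proof -
  have "has_bochner_integral (obs_space L) (\<lambda>y. (1 / real L) * (\<Sum>g<L. comp L s (shift L g t) y * f y)) ((1 / real L) * (\<Sum>g<L. v g))"
    by (intro has_bochner_integral_mult_right has_bochner_integral_sum) (use h in auto)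
  then show ?thesis
    by (rule has_bochner_integral_cong[THEN iffD1, rotated -1]) (auto simp: mra_comp[OF s] sum_distrib_right)
qed

lemma P0:
  assumes s: "0 < s" and L: "1 \<le> L"
  shows "has_bochner_integral (obs_space L) (mra_density L s t) 1"
proof -
  have "has_bochner_integral (obs_space L) (\<lambda>y. mra_density L s t y * 1) ((1 / real L) * (\<Sum>g<L. 1))"
    by (rule mix_hbi[OF s]) (use comp_I0[OF s] in simp)
  then show ?thesis using L by simp
qed

lemma P2:
  assumes s: "0 < s" and L: "1 \<le> L" and i: "i < L" and j: "j < L"
  shows "has_bochner_integral (obs_space L) (\<lambda>y. mra_density L s t y * (y i * y j)) (moment2 L t i j + (if i = j then s^2 else 0))"
proof -
  have "has_bochner_integral (obs_space L) (\<lambda>y. mra_density L s t y * (y i * y j))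
     ((1 / real L) * (\<Sum>g<L. shift L g t i * shift L g t j + (if i = j then s^2 else 0)))"
    by (rule mix_hbi[OF s]) (rule comp_I2[OF s i j])
  also have "(1 / real L) * (\<Sum>g<L. shift L g t i * shift L g t j + (if i = j then s^2 else 0))
      = moment2 L t i j + (if i = j then s^2 else 0)"
    using L by (simp add: moment2_def sum.distrib field_simps)
  finally show ?thesis .
qed

lemma shift_sq_le:
  assumes i: "i < L" shows "(shift L g t i)^2 \<le> sqnorm L t"
proof -
  have L: "0 < L" using i by simp
  have "(i + g) mod L \<in> {..<L}" using L by simp
  then have "(t ((i + g) mod L))^2 \<le> (\<Sum>k<L. (t k)^2)"
    by (intro member_le_sum) auto
  then show ?thesis using i by (simp add: shift_def sqnorm_def)
qed

lemma quart_bound: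
  fixes a s B :: real assumes "a^2 \<le> B" "1 \<le> s"
  shows "a^4 + 6 * a^2 * s^2 + 3 * s^4 \<le> (B^2 + 6 * B + 3) * s^4"
proof -
  have B: "0 \<le> B" using assms(1) by (meson order_trans zero_le_power2)
  have s2: "1 \<le> s^2" using assms(2) by (simp add: one_le_power)
  have s4: "s^4 = s^2 * s^2" by (simp add: power2_eq_square eval_nat_numeral)
  have s41: "1 \<le> s^4" using assms(2) by (simp add: one_le_power)
  have "a^4 = (a^2)^2" by (simp add: eval_nat_numeral)
  also have "\<dots> \<le> B^2" using assms(1) by (intro power_mono) auto
  also have "\<dots> \<le> B^2 * s^4" using s41 mult_left_mono[OF s41, of "B^2"] by simp
  finally have 1: "a^4 \<le> B^2 * s^4" .
  have "6 * a^2 * s^2 \<le> 6 * B * s^2" using assms(1) s2 by (intro mult_right_mono) auto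
  also have "\<dots> \<le> 6 * B * s^4" using B s2 s4 mult_left_mono[of "s^2" "s^4" "6 * B"] mult_left_mono[OF s2, of "s^2"] by simp
  finally have 2: "6 * a^2 * s^2 \<le> 6 * B * s^4" .
  show ?thesis using 1 2 by (simp add: algebra_simps)
qed

lemma P4:
  assumes s: "1 \<le> s" and L: "1 \<le> L" and i: "i < L" and B: "sqnorm L t \<le> B"
  shows "integrable (obs_space L) (\<lambda>y. mra_density L s t y * (y i)^4)"
    and "(\<integral>y. mra_density L s t y * (y i)^4 \<partial>obs_space L) \<le> (B^2 + 6 * B + 3) * s^4"
proof -
  have s0: "0 < s" using s by simp
  have h: "has_bochner_integral (obs_space L) (\<lambda>y. mra_density L s t y * (y i)^4)
     ((1 / real L) * (\<Sum>g<L. (shift L g t i)^4 + 6 * (shift L g t i)^2 * s^2 + 3 * s^4))"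
    by (rule mix_hbi[OF s0]) (rule comp_I4[OF s0 i])
  then show "integrable (obs_space L) (\<lambda>y. mra_density L s t y * (y i)^4)" by (rule integrable.intros)
  have "(1 / real L) * (\<Sum>g<L. (shift L g t i)^4 + 6 * (shift L g t i)^2 * s^2 + 3 * s^4)
      \<le> (1 / real L) * (\<Sum>g<L. (B^2 + 6 * B + 3) * s^4)"
    by (intro mult_left_mono sum_mono quart_bound order_trans[OF shift_sq_le[OF i] B] s) auto
  also have "\<dots> = (B^2 + 6 * B + 3) * s^4" using L by simp
  finally show "(\<integral>y. mra_density L s t y * (y i)^4 \<partial>obs_space L) \<le> (B^2 + 6 * B + 3) * s^4"
    using has_bochner_integral_integral_eq[OF h] by simp
qed
lemma pt_aux:
  fixes y a b B :: real assumes a: "a^2 \<le> B" and b: "b^2 \<le> B"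
  shows "(y - b)^2 \<le> (y - a)^2 + y^2 + 5 * B"
proof -
  have h1: "0 \<le> (y - (a - b))^2" by simp
  have h2: "0 \<le> (a + b)^2" by simp
  have e: "(y - b)^2 - ((y - a)^2 + y^2 + 5 * B) = - ((y - (a - b))^2) - (a + b)^2 + a^2 + 3 * b^2 - 5 * B"
    by (simp add: power2_eq_square algebra_simps)
  have "0 \<le> B" using a by (meson order_trans zero_le_power2)
  then show ?thesis using e h1 h2 a b by linarith
qed
lemma ratio_le:
  assumes s: "0 < s" and Bt: "sqnorm L t \<le> B" and Bp: "sqnorm L p \<le> B"
  shows "mra_density L s t y \<le> exp (((\<Sum>i<L. (y i)^2) + 5 * real L * B) / (2 * s^2)) * mra_density L s p y"
proof -
  define E where "E = exp (((\<Sum>i<L. (y i)^2) + 5 * real L * B) / (2 * s^2))"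
  define e where "e g = exp (- (\<Sum>i<L. (y i - shift L g t i)^2) / (2 * s^2))" for g
  define f where "f h = exp (- (\<Sum>i<L. (y i - shift L h p i)^2) / (2 * s^2))" for h
  define c where "c = (2 * pi * s^2) powr (- real L / 2)"
  have c: "0 \<le> c" by (simp add: c_def)
  have s2: "0 < 2 * s^2" using s by simp
  have termle: "e g \<le> E * f h" if g: "g < L" and h: "h < L" for g h
  proof -
    have "(\<Sum>i<L. (y i - shift L h p i)^2) \<le> (\<Sum>i<L. (y i - shift L g t i)^2 + (y i)^2 + 5 * B)"
      by (intro sum_mono pt_aux order_trans[OF shift_sq_le Bt] order_trans[OF shift_sq_le Bp]) auto
    also have "\<dots> = (\<Sum>i<L. (y i - shift L g t i)^2) + (\<Sum>i<L. (y i)^2) + 5 * real L * B"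
      by (simp add: sum.distrib)
    finally have "- (\<Sum>i<L. (y i - shift L g t i)^2) \<le> ((\<Sum>i<L. (y i)^2) + 5 * real L * B) - (\<Sum>i<L. (y i - shift L h p i)^2)"
      by linarith
    then have "(- (\<Sum>i<L. (y i - shift L g t i)^2)) / (2 * s^2) \<le> (((\<Sum>i<L. (y i)^2) + 5 * real L * B) - (\<Sum>i<L. (y i - shift L h p i)^2)) / (2 * s^2)"
      by (rule divide_right_mono) (use s2 in simp)
    also have "\<dots> = ((\<Sum>i<L. (y i)^2) + 5 * real L * B) / (2 * s^2) + (- (\<Sum>i<L. (y i - shift L h p i)^2)) / (2 * s^2)"
      by (simp add: diff_divide_distrib)
    finally have "exp ((- (\<Sum>i<L. (y i - shift L g t i)^2)) / (2 * s^2)) \<le> exp (((\<Sum>i<L. (y i)^2) + 5 * real L * B) / (2 * s^2) + (- (\<Sum>i<L. (y i - shift L h p i)^2)) / (2 * s^2))"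
      by simp
    then show ?thesis unfolding e_def f_def E_def exp_add by simp
  qed
  have sum_le: "(\<Sum>g<L. e g) \<le> E * (\<Sum>h<L. f h)"
  proof (cases "L = 0")
    case True then show ?thesis by simp
  next
    case False
    have "real L * (\<Sum>g<L. e g) = (\<Sum>g<L. \<Sum>h<L. e g)" by (simp add: sum_distrib_left)
    also have "\<dots> \<le> (\<Sum>g<L. \<Sum>h<L. E * f h)" by (intro sum_mono termle) auto
    also have "\<dots> = real L * (E * (\<Sum>h<L. f h))" by (simp add: sum_distrib_left)
    finally show ?thesis using False by simp
  qed
  have "mra_density L s t y = (c / real L) * (\<Sum>g<L. e g)"
    by (simp add: mra_density_def e_def c_def sum_distrib_left)
  also have "\<dots> \<le> (c / real L) * (E * (\<Sum>h<L. f h))"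
    using sum_le c by (intro mult_left_mono) auto
  also have "\<dots> = E * mra_density L s p y"
    by (simp add: mra_density_def f_def c_def sum_distrib_left mult_ac)
  finally show ?thesis unfolding E_def .
qed
lemma mra_meas[measurable]: "mra_density L s t \<in> borel_measurable (obs_space L)"
  unfolding obs_space_def mra_density_def shift_def by measurable

lemma coord_meas[measurable]: "i < L \<Longrightarrow> (\<lambda>y. (y::nat\<Rightarrow>real) i) \<in> borel_measurable (obs_space L)"
  unfolding obs_space_def by measurable

lemma mra_pos:
  assumes s: "0 < s" and L: "1 \<le> L"
  shows "0 < mra_density L s t y"
proof -
  have "0 < (\<Sum>g<L. (2 * pi * s^2) powr (- real L / 2) * exp (- (\<Sum>i<L. (y i - shift L g t i)^2) / (2 * s^2)))"
  proof -
    have "0 \<in> {..<L}" using L by simp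
    then have "{..<L} \<noteq> {}" by blast
    then show ?thesis using s by (intro sum_pos) auto
  qed
  then show ?thesis using L by (simp add: mra_density_def)
qed

lemma log_bound:
  assumes s: "0 < s" and L: "1 \<le> L" and Bt: "sqnorm L t \<le> B" and Bp: "sqnorm L p \<le> B"
  shows "\<bar>ln (mra_density L s t y / mra_density L s p y)\<bar> \<le> ((\<Sum>i<L. (y i)^2) + 5 * real L * B) / (2 * s^2)"
proof -
  define A where "A = ((\<Sum>i<L. (y i)^2) + 5 * real L * B) / (2 * s^2)"
  have Pp: "0 < mra_density L s t y" by (rule mra_pos[OF s L])
  have Qp: "0 < mra_density L s p y" by (rule mra_pos[OF s L])
  have 1: "mra_density L s t y \<le> exp A * mra_density L s p y" unfolding A_def by (rule ratio_le[OF s Bt Bp])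
  have 2: "mra_density L s p y \<le> exp A * mra_density L s t y" unfolding A_def by (rule ratio_le[OF s Bp Bt])
  have "mra_density L s t y / mra_density L s p y \<le> exp A" using 1 Qp by (simp add: divide_le_eq)
  then have u: "ln (mra_density L s t y / mra_density L s p y) \<le> A"
    using Pp Qp by (metis divide_pos_pos ln_exp ln_le_cancel_iff exp_gt_zero)
  have "mra_density L s p y / mra_density L s t y \<le> exp A" using 2 Pp by (simp add: divide_le_eq)
  then have "ln (mra_density L s p y / mra_density L s t y) \<le> A"
    using Pp Qp by (metis divide_pos_pos ln_exp ln_le_cancel_iff exp_gt_zero)
  moreover have "ln (mra_density L s p y / mra_density L s t y) = - ln (mra_density L s t y / mra_density L s p y)"
    using Pp Qp by (simp add: ln_div)
  ultimately show ?thesis using u unfolding A_def[symmetric] by linarith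
qed

lemma KL_integrable:
  assumes s: "0 < s" and L: "1 \<le> L" and Bt: "sqnorm L t \<le> B" and Bp: "sqnorm L p \<le> B"
  shows "integrable (obs_space L) (\<lambda>y. mra_density L s t y * ln (mra_density L s t y / mra_density L s p y))"
proof -
  let ?f = "\<lambda>y. (1 / (2 * s^2)) * ((\<Sum>i<L. mra_density L s t y * (y i * y i)) + (5 * real L * B) * mra_density L s t y)"
  have fi: "integrable (obs_space L) ?f"
  proof -
    have "integrable (obs_space L) (\<lambda>y. mra_density L s t y * (y i * y i))" if "i < L" for i
      using integrable.intros[OF P2[OF s L that that]] .
    moreover have "integrable (obs_space L) (mra_density L s t)"
      using integrable.intros[OF P0[OF s L]] .
    ultimately have a: "integrable (obs_space L) (\<lambda>y. \<Sum>i<L. mra_density L s t y * (y i * y i))"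
      and b: "integrable (obs_space L) (\<lambda>y. (5 * real L * B) * mra_density L s t y)"
      by (auto intro!: integrable_sum)
    have "integrable (obs_space L) (\<lambda>y. (\<Sum>i<L. mra_density L s t y * (y i * y i)) + (5 * real L * B) * mra_density L s t y)"
      by (rule Bochner_Integration.integrable_add[OF a b])
    then show ?thesis by (rule integrable_mult_right)
  qed
  have me: "(\<lambda>y. mra_density L s t y * ln (mra_density L s t y / mra_density L s p y)) \<in> borel_measurable (obs_space L)"
    by measurable
  have ae: "AE y in obs_space L. norm (mra_density L s t y * ln (mra_density L s t y / mra_density L s p y)) \<le> norm (?f y)"
  proof (intro AE_I2)
    fix y :: "nat \<Rightarrow> real"
    have Pp: "0 < mra_density L s t y" by (rule mra_pos[OF s L])
    have eq: "?f y = mra_density L s t y * (((\<Sum>i<L. (y i)^2) + 5 * real L * B) / (2 * s^2))"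
    proof -
      have h: "(\<Sum>i<L. mra_density L s t y * (y i * y i)) = mra_density L s t y * (\<Sum>i<L. (y i)^2)"
        by (simp add: sum_distrib_left power2_eq_square)
      show ?thesis unfolding h using s by (simp add: field_simps)
    qed
    have "norm (mra_density L s t y * ln (mra_density L s t y / mra_density L s p y))
        = mra_density L s t y * \<bar>ln (mra_density L s t y / mra_density L s p y)\<bar>"
      using Pp by (simp add: abs_mult)
    also have "\<dots> \<le> ?f y" unfolding eq
      using log_bound[OF s L Bt Bp, of y] Pp by (intro mult_left_mono) auto
    also have "\<dots> \<le> norm (?f y)" unfolding real_norm_def by (rule abs_ge_self)
    finally show "norm (mra_density L s t y * ln (mra_density L s t y / mra_density L s p y)) \<le> norm (?f y)" .
  qed
  show ?thesis by (rule Bochner_Integration.integrable_bound[OF fi me ae])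
qed

lemma X_CS:
  fixes D :: "nat \<Rightarrow> nat \<Rightarrow> real" and y :: "nat \<Rightarrow> real"
  shows "(\<Sum>i<L. \<Sum>j<L. D i j * (y i * y j))^2 \<le> (\<Sum>i<L. \<Sum>j<L. (D i j)^2) * (real L * (\<Sum>i<L. (y i)^4))"
proof -
  let ?A = "{..<L} \<times> {..<L}"
  have e1: "(\<Sum>i<L. \<Sum>j<L. D i j * (y i * y j)) = (\<Sum>x\<in>?A. D (fst x) (snd x) * (y (fst x) * y (snd x)))"
    by (simp add: sum.cartesian_product case_prod_beta')
  have e2: "(\<Sum>i<L. \<Sum>j<L. (D i j)^2) = (\<Sum>x\<in>?A. (D (fst x) (snd x))^2)"
    by (simp add: sum.cartesian_product case_prod_beta')
  have e3: "(\<Sum>x\<in>?A. (y (fst x) * y (snd x))^2) = (\<Sum>i<L. (y i)^2)^2"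
  proof -
    have "(\<Sum>x\<in>?A. (y (fst x) * y (snd x))^2) = (\<Sum>i<L. \<Sum>j<L. (y i)^2 * (y j)^2)"
      by (simp add: sum.cartesian_product case_prod_beta' power_mult_distrib)
    also have "\<dots> = (\<Sum>i<L. (y i)^2) * (\<Sum>j<L. (y j)^2)" by (simp add: sum_product)
    finally show ?thesis by (simp add: power2_eq_square)
  qed
  have "(\<Sum>i<L. \<Sum>j<L. D i j * (y i * y j))^2 \<le> (\<Sum>i<L. \<Sum>j<L. (D i j)^2) * (\<Sum>i<L. (y i)^2)^2"
    unfolding e1 e2 e3[symmetric] by (rule Cauchy_Schwarz_ineq_sum)
  also have "(\<Sum>i<L. (y i)^2)^2 \<le> real L * (\<Sum>i<L. (y i)^4)"
  proof -
    have "(\<Sum>i<L. (y i)^2)^2 \<le> (\<Sum>i<L. ((y i)^2)^2) * card {..<L::nat}"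
      by (rule sum_squared_le_sum_of_squares)
    then show ?thesis by (simp add: power_mult[symmetric] mult.commute)
  qed
  then have "(\<Sum>i<L. \<Sum>j<L. (D i j)^2) * (\<Sum>i<L. (y i)^2)^2 \<le> (\<Sum>i<L. \<Sum>j<L. (D i j)^2) * (real L * (\<Sum>i<L. (y i)^4))"
    by (intro mult_left_mono) (auto intro!: sum_nonneg)
  finally show ?thesis .
qed
lemma exp_le_quad:
  fixes t :: real assumes "t \<le> 1"
  shows "exp t \<le> 1 + t + t^2"
proof (cases "0 \<le> t")
  case True then show ?thesis using exp_bound[OF True assms] by simp
next
  case False
  define u where "u = - t"
  have u: "0 \<le> u" using False u_def by simp
  have D: "1 + u + u^2 / 2 \<le> exp u" by (rule exp_lower_Taylor_quadratic[OF u])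
  have Dp: "0 < 1 + u + u^2 / 2" using u by (simp add: add_pos_nonneg)
  have key: "1 \<le> (1 - u + u^2) * (1 + u + u^2 / 2)"
  proof -
    have "(1 - u + u^2) * (1 + u + u^2 / 2) = 1 + u^2/2 + u^3/2 + u^4/2"
      by (simp add: field_simps power2_eq_square power3_eq_cube eval_nat_numeral)
    moreover have "0 \<le> u^2/2 + u^3/2 + u^4/2" using u by simp
    ultimately show ?thesis by simp
  qed
  have pos: "0 < 1 - u + u^2"
  proof -
    have "0 < (1 - u + u^2) * (1 + u + u^2 / 2)" using key by simp
    then show ?thesis using Dp by (simp add: zero_less_mult_iff)
  qed
  have "exp t = 1 / exp u" by (simp add: u_def exp_minus divide_inverse)
  also have "\<dots> \<le> 1 / (1 + u + u^2 / 2)" using D Dp by (intro divide_left_mono) auto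
  also have "\<dots> \<le> 1 - u + u^2" using key Dp by (simp add: divide_le_eq mult.commute)
  finally show ?thesis by (simp add: u_def)
qed

lemma young:
  fixes p q t :: real assumes p: "0 < p" and q: "0 < q"
  shows "p * (t - t^2) + p - q * (1 + t + t^2) \<le> p * ln (p / q)"
proof -
  define f where "f = min t 1"
  define u where "u = p / (q * exp f)"
  have u: "0 < u" using p q by (simp add: u_def)
  have lnu: "1 - 1 / u \<le> ln u"
  proof -
    have "ln (1 / u) \<le> 1 / u - 1" using u by (intro ln_le_minus_one) simp
    then show ?thesis using u by (simp add: ln_div)
  qed
  have "p * ln (p / q) = p * f + p * ln u"
    using p q by (simp add: u_def ln_div ln_mult algebra_simps)
  also have "p * ln u \<ge> p * (1 - 1 / u)" using lnu p by (intro mult_left_mono) auto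
  then have "p * f + p * ln u \<ge> p * f + p - q * exp f"
    using p q u by (simp add: u_def algebra_simps)
  finally have A: "p * f + p - q * exp f \<le> p * ln (p / q)" by simp
  have B: "t - t^2 \<le> f"
  proof (cases "t \<le> 1")
    case True then show ?thesis by (simp add: f_def)
  next
    case False
    then have "t - t^2 \<le> 1" by (simp add: power2_eq_square) (smt (verit) mult_le_cancel_left1)
    then show ?thesis using False by (simp add: f_def)
  qed
  have C: "exp f \<le> 1 + t + t^2"
  proof (cases "t \<le> 1")
    case True then show ?thesis using exp_le_quad[OF True] by (simp add: f_def)
  next
    case False
    have "exp 1 \<le> (3::real)" by (rule exp_le)
    moreover have "3 \<le> 1 + t + t^2" using False by (simp add: power2_eq_square) (smt (verit) mult_le_cancel_left1)
    ultimately show ?thesis using False by (simp add: f_def)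
  qed
  have "p * (t - t^2) + p - q * (1 + t + t^2) \<le> p * f + p - q * exp f"
  proof -
    have "p * (t - t^2) \<le> p * f" using B p by (simp add: mult_left_mono)
    moreover have "q * exp f \<le> q * (1 + t + t^2)" using C q by (simp add: mult_left_mono)
    ultimately show ?thesis by linarith
  qed
  then show ?thesis using A by simp
qed
lemma P2P:
  assumes s: "0 < s" and L: "1 \<le> L"
  shows "has_bochner_integral (obs_space L) (\<lambda>y. mra_density L s t y * (\<Sum>i<L. \<Sum>j<L. D i j * (y i * y j)))
     (\<Sum>i<L. \<Sum>j<L. D i j * (moment2 L t i j + (if i = j then s^2 else 0)))"
proof -
  have "has_bochner_integral (obs_space L) (\<lambda>y. \<Sum>i<L. \<Sum>j<L. D i j * (mra_density L s t y * (y i * y j)))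
     (\<Sum>i<L. \<Sum>j<L. D i j * (moment2 L t i j + (if i = j then s^2 else 0)))"
    by (intro has_bochner_integral_sum has_bochner_integral_mult_right P2[OF s L]) auto
  then show ?thesis
    by (rule has_bochner_integral_cong[THEN iffD1, rotated -1]) (auto simp: sum_distrib_left mult_ac)
qed

lemma main_bound:
  assumes L: "1 \<le> L" and s: "1 \<le> s" and Bt: "sqnorm L t \<le> B" and Bp: "sqnorm L p \<le> B" and B0: "0 \<le> B"
  shows "frob2_Delta2 L t p / (8 * (real L)^2 * (B^2 + 6 * B + 3) * s^4) \<le> KL_mra L s t p"
proof -
  have s0: "0 < s" using s by simp
  define P where "P = mra_density L s t"
  define Q where "Q = mra_density L s p"
  define D where "D i j = moment2 L t i j - moment2 L p i j" for i j
  define F where "F = frob2_Delta2 L t p"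
  have F': "F = (\<Sum>i<L. \<Sum>j<L. (D i j)^2)" by (simp add: F_def frob2_Delta2_def D_def)
  have F0: "0 \<le> F" unfolding F' by (auto intro!: sum_nonneg)
  define W where "W = B^2 + 6 * B + 3"
  have W0: "0 < W" using B0 by (simp add: W_def add_nonneg_pos)
  define lam where "lam = 1 / (4 * (real L)^2 * W * s^4)"
  have lam0: "0 \<le> lam" using W0 by (simp add: lam_def)
  define X where "X y = (\<Sum>i<L. \<Sum>j<L. D i j * (y i * y j))" for y
  define S4 where "S4 y = (\<Sum>i<L. P y * (y i)^4 + Q y * (y i)^4)" for y
  define G where "G y = lam * (P y * X y - Q y * X y) + P y - Q y - lam^2 * F * real L * S4 y" for y
  have Ppos: "0 < P y" for y unfolding P_def by (rule mra_pos[OF s0 L])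
  have Qpos: "0 < Q y" for y unfolding Q_def by (rule mra_pos[OF s0 L])
  have pw: "G y \<le> P y * ln (P y / Q y)" for y
  proof -
    define u where "u = lam * X y"
    have Y: "P y * (u - u^2) + P y - Q y * (1 + u + u^2) \<le> P y * ln (P y / Q y)"
      by (rule young[OF Ppos Qpos])
    have e: "P y * (u - u^2) + P y - Q y * (1 + u + u^2) = lam * (P y * X y - Q y * X y) + P y - Q y - u^2 * (P y + Q y)"
      by (simp add: u_def algebra_simps)
    have "u^2 = lam^2 * (X y)^2" by (simp add: u_def power_mult_distrib)
    also have "\<dots> \<le> lam^2 * (F * (real L * (\<Sum>i<L. (y i)^4)))"
      unfolding X_def F' by (intro mult_left_mono X_CS) auto
    finally have u2: "u^2 \<le> lam^2 * (F * (real L * (\<Sum>i<L. (y i)^4)))" .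
    have S4e: "S4 y = (P y + Q y) * (\<Sum>i<L. (y i)^4)"
      by (simp add: S4_def sum_distrib_left algebra_simps sum.distrib)
    have "u^2 * (P y + Q y) \<le> lam^2 * (F * (real L * (\<Sum>i<L. (y i)^4))) * (P y + Q y)"
      using u2 Ppos[of y] Qpos[of y] by (intro mult_right_mono) auto
    also have "\<dots> = lam^2 * F * real L * S4 y" by (simp add: S4e mult_ac)
    finally have "u^2 * (P y + Q y) \<le> lam^2 * F * real L * S4 y" .
    then show ?thesis using Y e unfolding G_def by linarith
  qed
  define IPX where "IPX = (\<Sum>i<L. \<Sum>j<L. D i j * (moment2 L t i j + (if i = j then s^2 else 0)))"
  define IQX where "IQX = (\<Sum>i<L. \<Sum>j<L. D i j * (moment2 L p i j + (if i = j then s^2 else 0)))"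
  have hPX: "has_bochner_integral (obs_space L) (\<lambda>y. P y * X y) IPX"
    unfolding P_def X_def IPX_def by (rule P2P[OF s0 L])
  have hQX: "has_bochner_integral (obs_space L) (\<lambda>y. Q y * X y) IQX"
    unfolding Q_def X_def IQX_def by (rule P2P[OF s0 L])
  have IF: "IPX - IQX = F"
    unfolding IPX_def IQX_def F' by (simp add: sum_subtractf[symmetric] D_def power2_eq_square algebra_simps)
  have hP: "has_bochner_integral (obs_space L) P 1" unfolding P_def by (rule P0[OF s0 L])
  have hQ: "has_bochner_integral (obs_space L) Q 1" unfolding Q_def by (rule P0[OF s0 L])
  have iP4: "integrable (obs_space L) (\<lambda>y. P y * (y i)^4)" if "i < L" for i
    unfolding P_def by (rule P4(1)[OF s L that Bt])
  have iQ4: "integrable (obs_space L) (\<lambda>y. Q y * (y i)^4)" if "i < L" for i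
    unfolding Q_def by (rule P4(1)[OF s L that Bp])
  define I4 where "I4 = (\<Sum>i<L. (\<integral>y. P y * (y i)^4 \<partial>obs_space L) + (\<integral>y. Q y * (y i)^4 \<partial>obs_space L))"
  have hS4: "has_bochner_integral (obs_space L) S4 I4"
    unfolding S4_def[abs_def] I4_def
    by (intro has_bochner_integral_sum has_bochner_integral_add has_bochner_integral_integrable iP4 iQ4) auto
  have I4le: "I4 \<le> 2 * real L * W * s^4"
  proof -
    have "I4 \<le> (\<Sum>i<L. W * s^4 + W * s^4)"
      unfolding I4_def W_def P_def Q_def
      by (intro sum_mono add_mono P4(2)[OF s L _ Bt] P4(2)[OF s L _ Bp]) auto
    then show ?thesis by simp
  qed
  have hG: "has_bochner_integral (obs_space L) G (lam * (IPX - IQX) + 1 - 1 - lam^2 * F * real L * I4)"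
  proof -
    have "has_bochner_integral (obs_space L) (\<lambda>y. lam * (P y * X y - Q y * X y) + P y - Q y - lam^2 * F * real L * S4 y) (lam * (IPX - IQX) + 1 - 1 - lam^2 * F * real L * I4)"
      by (intro has_bochner_integral_diff has_bochner_integral_add has_bochner_integral_mult_right hPX hQX hP hQ hS4)
    then show ?thesis unfolding G_def[abs_def] .
  qed
  have iKL: "integrable (obs_space L) (\<lambda>y. P y * ln (P y / Q y))"
    unfolding P_def Q_def by (rule KL_integrable[OF s0 L Bt Bp])
  have "lam * F / 2 \<le> lam * (IPX - IQX) + 1 - 1 - lam^2 * F * real L * I4"
  proof -
    have "lam^2 * F * real L * I4 \<le> lam^2 * F * real L * (2 * real L * W * s^4)"
      using I4le lam0 F0 by (intro mult_left_mono) auto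
    also have "\<dots> = lam * F * (lam * (2 * (real L)^2 * W * s^4))" by (simp add: power2_eq_square mult_ac)
    also have "lam * (2 * (real L)^2 * W * s^4) = 1 / 2"
      using W0 s0 L by (simp add: lam_def field_simps)
    finally show ?thesis using IF by (simp add: mult.commute)
  qed
  also have "\<dots> = integral\<^sup>L (obs_space L) G" using hG by (simp add: has_bochner_integral_integral_eq)
  also have "\<dots> \<le> (\<integral>y. P y * ln (P y / Q y) \<partial>obs_space L)"
    by (intro integral_mono pw iKL integrable.intros[OF hG])
  also have "\<dots> = KL_mra L s t p" by (simp add: KL_mra_def P_def Q_def)
  finally have "lam * F / 2 \<le> KL_mra L s t p" .
  moreover have "lam * F / 2 = frob2_Delta2 L t p / (8 * (real L)^2 * (B^2 + 6 * B + 3) * s^4)"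
    by (simp add: lam_def F_def W_def)
  ultimately show ?thesis by simp
qed
theorem proposition2p4:
  fixes L :: nat and T :: "(nat \<Rightarrow> real) set"
  assumes "L \<ge> 1"
    and "\<exists>B. \<forall>\<theta>\<in>T. sqnorm L \<theta> \<le> B"
  shows "\<exists>C>0. \<exists>\<sigma>0>0. \<exists>\<delta>>0. \<forall>\<sigma>>\<sigma>0. \<forall>\<theta>\<in>T. \<forall>\<phi>\<in>T.
           rho L \<theta> \<phi> < \<delta> \<longrightarrow>
           KL_mra L \<sigma> \<theta> \<phi> \<ge> C * \<sigma> powr (-4) * frob2_Delta2 L \<theta> \<phi>"
proof -
  obtain B where B: "\<forall>\<theta>\<in>T. sqnorm L \<theta> \<le> B" using assms(2) by blast
  define B0 where "B0 = max B 0"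
  have B0: "0 \<le> B0" by (simp add: B0_def)
  have BB: "\<forall>\<theta>\<in>T. sqnorm L \<theta> \<le> B0" using B by (auto simp: B0_def intro: le_max_iff_disj[THEN iffD2])
  define C where "C = 1 / (8 * (real L)^2 * (B0^2 + 6 * B0 + 3))"
  have Cpos: "0 < C" using assms(1) B0 by (simp add: C_def add_nonneg_pos)
  have main: "\<forall>\<sigma>>1. \<forall>\<theta>\<in>T. \<forall>\<phi>\<in>T. rho L \<theta> \<phi> < 1 \<longrightarrow>
           KL_mra L \<sigma> \<theta> \<phi> \<ge> C * \<sigma> powr (-4) * frob2_Delta2 L \<theta> \<phi>"
  proof (intro allI impI ballI)
    fix \<sigma> :: real and \<theta> \<phi>
    assume s: "1 < \<sigma>" and t: "\<theta> \<in> T" and p: "\<phi> \<in> T"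
    have "C * \<sigma> powr (-4) * frob2_Delta2 L \<theta> \<phi> = frob2_Delta2 L \<theta> \<phi> / (8 * (real L)^2 * (B0^2 + 6 * B0 + 3) * \<sigma>^4)"
      using s by (simp add: C_def powr_minus_divide)
    also have "\<dots> \<le> KL_mra L \<sigma> \<theta> \<phi>"
      using s t p BB B0 assms(1) by (intro main_bound) auto
    finally show "KL_mra L \<sigma> \<theta> \<phi> \<ge> C * \<sigma> powr (-4) * frob2_Delta2 L \<theta> \<phi>" .
  qed
  show ?thesis using Cpos main by (intro exI[of _ C] conjI exI[of _ "1::real"]) auto
qed

end
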